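(* Let $A\in\mathbb{C}^{m\times n}$ have rank $r$, $B\in\mathbb{C}^{m\times n}$ have rank $s$, and $E=B-A$. Then $$\|B^{\dagger}-A^{\dagger}\|_{F}^{2}\leq\min\big\{\alpha_{1}+\|B^{\dagger}EA^{\dagger}\|_{F}^{2},\ \alpha_{2}+\|A^{\dagger}EB^{\dagger}\|_{F}^{2}\big\},$$ where $$\alpha_{1}:=\|A^{\dagger}\|_{2}^{2}\big(\|A^{\dagger}E\|_{F}^{2}-\|A^{\dagger}EB^{\dagger}B\|_{F}^{2}\big)+\|B^{\dagger}\|_{2}^{2}\big(\|EB^{\dagger}\|_{F}^{2}-\|AA^{\dagger}EB^{\dagger}\|_{F}^{2}\big),$$ $$\alpha_{2}:=\|A^{\dagger}\|_{2}^{2}\big(\|EA^{\dagger}\|_{F}^{2}-\|BB^{\dagger}EA^{\dagger}\|_{F}^{2}\big)+\|B^{\dagger}\|_{2}^{2}\big(\|B^{\dagger}E\|_{F}^{2}-\|B^{\dagger}EA^{\dagger}A\|_{F}^{2}\big).$$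
   Context: $M^{\dagger}$ denotes the Moore–Penrose inverse of $M$, $\|\cdot\|_{2}$ the spectral norm and $\|\cdot\|_{F}$ the Frobenius norm. *)

theory Defs
  imports "HOL-Analysis.Analysis"
begin

definition cadjoint :: "complex^'n^'m \<Rightarrow> complex^'m^'n" where
  "cadjoint A = (\<chi> i j. cnj (A $ j $ i))"

definition pinv :: "complex^'n^'m \<Rightarrow> complex^'m^'n" where
  "pinv A = (THE X. A ** X ** A = A \<and> X ** A ** X = X \<and>
                    cadjoint (A ** X) = A ** X \<and> cadjoint (X ** A) = X ** A)"

definition spec_norm :: "complex^'n^'m \<Rightarrow> real" where
  "spec_norm A = onorm (\<lambda>x::complex^'n. A *v x)"

definition frob_norm :: "complex^'n^'m \<Rightarrow> real" where
  "frob_norm A = sqrt (\<Sum>i\<in>UNIV. \<Sum>j\<in>UNIV. (cmod (A $ i $ j))\<^sup>2)"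

end

theory Submission
  imports Defs
begin


lemma cadj_nth[simp]: "cadjoint A $ i $ j = cnj (A $ j $ i)"
  by (simp add: cadjoint_def)

lemma cadj_cadj[simp]: "cadjoint (cadjoint A) = A"
  by (simp add: vec_eq_iff)

lemma cadj_mult: "cadjoint (A ** B) = cadjoint B ** cadjoint (A::complex^_^_)"
  by (simp add: vec_eq_iff matrix_matrix_mult_def mult.commute)

lemma cadj_diff: "cadjoint (A - B) = cadjoint A - cadjoint B"
  by (simp add: vec_eq_iff)

lemma cadj_minus: "cadjoint (- A) = - cadjoint A"
  by (simp add: vec_eq_iff)

lemma cadj_one[simp]: "cadjoint (mat 1 :: complex^'n^'n) = mat 1"
  by (simp add: vec_eq_iff mat_def)

lemma mmul_ldiff: "(A::'a::ring_1^_^_) ** (B - C) = A ** B - A ** C"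
  by (simp add: vec_eq_iff matrix_matrix_mult_def sum_subtractf right_diff_distrib)

lemma mmul_rdiff: "((B::'a::ring_1^_^_) - C) ** A = B ** A - C ** A"
  by (simp add: vec_eq_iff matrix_matrix_mult_def sum_subtractf left_diff_distrib)

lemma mmul_radd: "((B::'a::ring_1^_^_) + C) ** A = B ** A + C ** A"
  by (simp add: vec_eq_iff matrix_matrix_mult_def sum.distrib distrib_right)

lemma mmul_lneg: "(- (B::'a::ring_1^_^_)) ** A = - (B ** A)"
  by (simp add: vec_eq_iff matrix_matrix_mult_def sum_negf)

lemma mmul_rneg: "(B::'a::ring_1^_^_) ** (- A) = - (B ** A)"
  by (simp add: vec_eq_iff matrix_matrix_mult_def sum_negf)

lemma inner_cx: "inner (a::complex) b = Re (cnj a * b)"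
  by (simp add: inner_complex_def)

lemma inner_cvec: "inner (x::complex^'n) y = Re (\<Sum>i\<in>UNIV. cnj (x$i) * y$i)"
  by (simp add: inner_vec_def inner_cx)

lemma inner_cmat: "inner (X::complex^'n^'m) Y = Re (\<Sum>i\<in>UNIV. \<Sum>j\<in>UNIV. cnj (X$i$j) * Y$i$j)"
  by (simp add: inner_vec_def inner_cx)

lemma inner_adj_vec: "inner x ((M::complex^'n^'m) *v y) = inner (cadjoint M *v x) y"
proof -
  have "(\<Sum>i\<in>UNIV. cnj (x$i) * (\<Sum>j\<in>UNIV. M$i$j * y$j)) =
        (\<Sum>j\<in>UNIV. (\<Sum>i\<in>UNIV. M$i$j * cnj (x$i)) * y$j)"
  proof -
    have "(\<Sum>i\<in>UNIV. cnj (x$i) * (\<Sum>j\<in>UNIV. M$i$j * y$j)) =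
          (\<Sum>i\<in>UNIV. \<Sum>j\<in>UNIV. cnj (x$i) * M$i$j * y$j)"
      by (simp add: sum_distrib_left mult_ac)
    also have "\<dots> = (\<Sum>j\<in>UNIV. \<Sum>i\<in>UNIV. cnj (x$i) * M$i$j * y$j)"
      by (rule sum.swap)
    also have "\<dots> = (\<Sum>j\<in>UNIV. (\<Sum>i\<in>UNIV. M$i$j * cnj (x$i)) * y$j)"
      by (simp add: sum_distrib_left sum_distrib_right mult_ac)
    finally show ?thesis .
  qed
  then show ?thesis by (simp add: inner_cvec matrix_vector_mult_def)
qed

lemma sum3_swap: "(\<Sum>i\<in>(UNIV::'a::finite set). \<Sum>j\<in>(UNIV::'b::finite set). \<Sum>k\<in>(UNIV::'c::finite set). f i j k) =
   (\<Sum>k\<in>UNIV. \<Sum>j\<in>UNIV. \<Sum>i\<in>UNIV. (f i j k::'d::comm_monoid_add))"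
proof -
  have "(\<Sum>i\<in>(UNIV::'a set). \<Sum>j\<in>(UNIV::'b set). \<Sum>k\<in>(UNIV::'c set). f i j k) =
        (\<Sum>i\<in>UNIV. \<Sum>k\<in>UNIV. \<Sum>j\<in>UNIV. f i j k)"
    by (rule sum.cong[OF refl], rule sum.swap)
  also have "\<dots> = (\<Sum>k\<in>UNIV. \<Sum>i\<in>UNIV. \<Sum>j\<in>UNIV. f i j k)"
    by (rule sum.swap)
  also have "\<dots> = (\<Sum>k\<in>UNIV. \<Sum>j\<in>UNIV. \<Sum>i\<in>UNIV. f i j k)"
    by (rule sum.cong[OF refl], rule sum.swap)
  finally show ?thesis .
qed

lemma inner_adj_left: "inner X ((P::complex^'k^'m) ** Y) = inner (cadjoint P ** X) (Y::complex^'n^'k)"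
proof -
  have e1: "(\<Sum>i\<in>UNIV. \<Sum>j\<in>UNIV. cnj (X$i$j) * (\<Sum>k\<in>UNIV. P$i$k * Y$k$j)) =
        (\<Sum>i\<in>UNIV. \<Sum>j\<in>UNIV. \<Sum>k\<in>UNIV. cnj (X$i$j) * P$i$k * Y$k$j)"
    by (simp add: sum_distrib_left mult_ac)
  have e2: "(\<Sum>k\<in>UNIV. \<Sum>j\<in>UNIV. (\<Sum>i\<in>UNIV. P$i$k * cnj (X$i$j)) * Y$k$j) =
        (\<Sum>k\<in>UNIV. \<Sum>j\<in>UNIV. \<Sum>i\<in>UNIV. cnj (X$i$j) * P$i$k * Y$k$j)"
    by (simp add: sum_distrib_left sum_distrib_right mult_ac)
  have "(\<Sum>i\<in>UNIV. \<Sum>j\<in>UNIV. cnj (X$i$j) * (\<Sum>k\<in>UNIV. P$i$k * Y$k$j)) =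
        (\<Sum>k\<in>UNIV. \<Sum>j\<in>UNIV. (\<Sum>i\<in>UNIV. P$i$k * cnj (X$i$j)) * Y$k$j)"
    unfolding e1 e2 by (rule sum3_swap)
  then show ?thesis by (simp add: inner_cmat matrix_matrix_mult_def)
qed

lemma inner_adj_right: "inner X ((Y::complex^'k^'m) ** (P::complex^'n^'k)) = inner (X ** cadjoint P) Y"
proof -
  have "(\<Sum>i\<in>UNIV. \<Sum>j\<in>UNIV. cnj (X$i$j) * (\<Sum>k\<in>UNIV. Y$i$k * P$k$j)) =
        (\<Sum>i\<in>UNIV. \<Sum>k\<in>UNIV. (\<Sum>j\<in>UNIV. cnj (X$i$j) * P$k$j) * Y$i$k)"
    apply (simp add: sum_distrib_left sum_distrib_right mult_ac)
    apply (rule sum.cong, simp)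
    apply (subst sum.swap) apply simp
    done
  then show ?thesis by (simp add: inner_cmat matrix_matrix_mult_def)
qed

lemma norm2_vec: "(norm (x::'a::real_normed_vector^'n))^2 = (\<Sum>i\<in>UNIV. (norm (x$i))^2)"
  by (simp add: norm_vec_def L2_set_def sum_nonneg)

lemma frob_eq: "frob_norm A = norm A"
  by (simp add: frob_norm_def norm2_vec[symmetric])

lemma norm_cadj: "norm (cadjoint A) = norm A"
proof -
  have "(norm (cadjoint A))^2 = (norm A)^2"
    apply (simp add: norm2_vec)
    apply (subst sum.swap) apply simp
    done
  then show ?thesis by (simp add: power2_eq_iff_nonneg)
qed



lemma mv_linear: "linear (\<lambda>x::complex^'n. (M::complex^'n^'m) *v x)"
proof (rule linearI)
  fix x y :: "complex^'n" show "M *v (x + y) = M *v x + M *v y"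
    by (simp add: matrix_vector_right_distrib)
next
  fix c :: real and x :: "complex^'n" show "M *v (c *\<^sub>R x) = c *\<^sub>R (M *v x)"
    by (simp add: vec_eq_iff matrix_vector_mult_def scaleR_sum_right)
qed

lemma mv_bl: "bounded_linear (\<lambda>x::complex^'n. (M::complex^'n^'m) *v x)"
  using mv_linear linear_conv_bounded_linear by blast

lemma spec_ge: "norm ((M::complex^'n^'m) *v x) \<le> spec_norm M * norm x"
  unfolding spec_norm_def by (rule onorm[OF mv_bl])

lemma spec_nonneg: "0 \<le> spec_norm (M::complex^'n^'m)"
  unfolding spec_norm_def by (rule onorm_pos_le[OF mv_bl])

lemma norm2_cols: "(norm (X::complex^'n^'m))^2 = (\<Sum>j\<in>UNIV. (norm (column j X))^2)"
  apply (simp add: norm2_vec column_def)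
  apply (rule sum.swap)
  done

lemma column_mult: "column j ((M::complex^'k^'m) ** N) = M *v column j N"
  by (simp add: vec_eq_iff column_def matrix_matrix_mult_def matrix_vector_mult_def)

lemma frob_mult_left: "norm ((M::complex^'k^'m) ** (N::complex^'n^'k)) \<le> spec_norm M * norm N"
proof -
  have "(norm (M ** N))^2 = (\<Sum>j\<in>UNIV. (norm (M *v column j N))^2)"
    by (simp add: norm2_cols column_mult)
  also have "\<dots> \<le> (\<Sum>j\<in>UNIV. (spec_norm M * norm (column j N))^2)"
    by (rule sum_mono, rule power_mono[OF spec_ge], simp)
  also have "\<dots> = (spec_norm M * norm N)^2"
    by (simp add: norm2_cols[of N] power_mult_distrib sum_distrib_left)
  finally show ?thesis
    by (rule power2_le_imp_le) (simp add: spec_nonneg)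
qed

lemma spec_adj_le: "spec_norm (cadjoint (M::complex^'n^'m)) \<le> spec_norm M"
  unfolding spec_norm_def[of "cadjoint M"]
proof (rule onorm_bound[OF spec_nonneg])
  fix y :: "complex^'m"
  let ?z = "cadjoint M *v y"
  have "(norm ?z)^2 = inner ?z ?z" by (simp add: power2_norm_eq_inner)
  also have "\<dots> = inner y (M *v ?z)"
    using inner_adj_vec[of y "M" ?z] by simp
  also have "\<dots> \<le> norm y * norm (M *v ?z)" by (rule norm_cauchy_schwarz)
  also have "\<dots> \<le> norm y * (spec_norm M * norm ?z)"
    by (rule mult_left_mono[OF spec_ge], simp)
  finally have h: "(norm ?z)^2 \<le> (spec_norm M * norm y) * norm ?z" by (simp add: mult_ac)
  show "norm ?z \<le> spec_norm M * norm y"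
  proof (cases "norm ?z = 0")
    case True then show ?thesis by (simp add: spec_nonneg)
  next
    case False
    then have "0 < norm ?z" by simp
    with h show ?thesis by (simp add: power2_eq_square)
  qed
qed

lemma frob_mult_right: "norm ((N::complex^'k^'m) ** (M::complex^'n^'k)) \<le> norm N * spec_norm M"
proof -
  have "norm (N ** M) = norm (cadjoint M ** cadjoint N)"
    by (metis norm_cadj cadj_mult)
  also have "\<dots> \<le> spec_norm (cadjoint M) * norm (cadjoint N)" by (rule frob_mult_left)
  also have "\<dots> \<le> spec_norm M * norm N"
    by (simp add: norm_cadj mult_right_mono spec_adj_le)
  finally show ?thesis by (simp add: mult_ac)
qed



lemma solv_vec:
  fixes C :: "complex^'n^'m" and b :: "complex^'m"
  shows "\<exists>y. (cadjoint C ** C) *v y = cadjoint C *v b"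
proof -
  let ?M = "cadjoint C ** C"
  let ?v = "cadjoint C *v b"
  let ?S = "range (\<lambda>x. ?M *v x)"
  obtain r w where r: "r \<in> span ?S" and w: "\<And>u. u \<in> span ?S \<Longrightarrow> orthogonal w u"
    and vrw: "?v = r + w"
    using orthogonal_subspace_decomp_exists[of ?S ?v] by (metis orthogonal_commute)
  have span: "span ?S = ?S"
    using span_linear_image[OF mv_linear, of ?M UNIV] by (simp add: image_image)
  have hM: "cadjoint ?M = ?M" by (simp add: cadj_mult)
  have orthMx: "inner w (?M *v x) = 0" for x
    using w[of "?M *v x"] by (simp add: span orthogonal_def)
  have "inner w (?M *v (?M *v w)) = inner (?M *v w) (?M *v w)"
    using inner_adj_vec[of w ?M "?M *v w"] hM by simp
  then have Mw: "?M *v w = 0" using orthMx[of "?M *v w"] by simp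
  have "inner w (cadjoint C *v (C *v w)) = inner (C *v w) (C *v w)"
    using inner_adj_vec[of w "cadjoint C" "C *v w"] by simp
  moreover have "cadjoint C *v (C *v w) = 0" using Mw by (simp add: matrix_vector_mul_assoc)
  ultimately have Cw: "C *v w = 0" by simp
  have "inner w ?v = inner (C *v w) b"
    using inner_adj_vec[of w "cadjoint C" b] by simp
  then have wv: "inner w ?v = 0" using Cw by simp
  have wr: "inner w r = 0" using w[OF r] by (simp add: orthogonal_def)
  have "inner w w = inner w ?v - inner w r" using vrw by (simp add: inner_add_right)
  then have "w = 0" using wv wr by simp
  then have "?v \<in> ?S" using vrw r span by simp
  then show ?thesis by (metis (no_types, lifting) imageE)
qed

lemma solv_mat:
  fixes C :: "complex^'n^'m"
  shows "\<exists>Y::complex^'m^'n. (cadjoint C ** C) ** Y = cadjoint C"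
proof -
  have "\<forall>j. \<exists>y. (cadjoint C ** C) *v y = cadjoint C *v axis j 1"
    using solv_vec by blast
  then obtain y where y: "\<And>j. (cadjoint C ** C) *v y j = cadjoint C *v axis j 1"
    by metis
  let ?Y = "(\<chi> i j. y j $ i) :: complex^'m^'n"
  have "column j ((cadjoint C ** C) ** ?Y) = column j (cadjoint C)" for j
  proof -
    have "column j ?Y = y j" by (simp add: column_def vec_eq_iff)
    then have "column j ((cadjoint C ** C) ** ?Y) = cadjoint C *v axis j 1"
      by (simp add: column_mult y)
    also have "\<dots> = column j (cadjoint C)"
      by (simp add: vec_eq_iff column_def matrix_vector_mult_def axis_def if_distrib if_distribR cong: if_cong)
    finally show ?thesis .
  qed
  then have "(cadjoint C ** C) ** ?Y = cadjoint C"
    by (simp add: vec_eq_iff column_def)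
  then show ?thesis by blast
qed

lemma normal_props:
  fixes C :: "complex^'n^'m" and Y :: "complex^'m^'n"
  assumes h: "(cadjoint C ** C) ** Y = cadjoint C"
  shows "cadjoint (C ** Y) = C ** Y" and "C ** Y ** C = C"
proof -
  have "cadjoint Y ** ((cadjoint C ** C) ** Y) = cadjoint Y ** cadjoint C" using h by simp
  then have e: "cadjoint (C ** Y) ** (C ** Y) = cadjoint (C ** Y)"
    by (simp add: cadj_mult matrix_mul_assoc)
  have "cadjoint (cadjoint (C ** Y) ** (C ** Y)) = cadjoint (C ** Y) ** (C ** Y)"
    by (simp add: cadj_mult)
  then show s: "cadjoint (C ** Y) = C ** Y" using e by (metis cadj_cadj)
  have "cadjoint ((cadjoint C ** C) ** Y) = C" using h by simp
  then have "cadjoint (C ** Y) ** C = C" by (simp add: cadj_mult matrix_mul_assoc)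
  then show "C ** Y ** C = C" using s by simp
qed

lemma mp_exists:
  fixes A :: "complex^'n^'m"
  shows "\<exists>X. A ** X ** A = A \<and> X ** A ** X = X \<and>
            cadjoint (A ** X) = A ** X \<and> cadjoint (X ** A) = X ** A"
proof -
  obtain Y :: "complex^'m^'n" where Y: "(cadjoint A ** A) ** Y = cadjoint A"
    using solv_mat by blast
  obtain Z :: "complex^'n^'m" where Z0: "(cadjoint (cadjoint A) ** cadjoint A) ** Z = cadjoint (cadjoint A)"
    using solv_mat by blast
  note h1 = normal_props(2)[OF Y] and h2 = normal_props(1)[OF Y]
  note h3 = normal_props(2)[OF Z0] and h4 = normal_props(1)[OF Z0]
  have h3': "A ** cadjoint Z ** A = A"
    using arg_cong[OF h3, of cadjoint] by (simp add: cadj_mult matrix_mul_assoc)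
  have h4': "cadjoint (cadjoint Z ** A) = cadjoint Z ** A"
    using h4 by (metis cadj_cadj cadj_mult)
  let ?X = "cadjoint Z ** A ** Y"
  have AX: "A ** ?X = A ** Y"
    using h3' by (metis matrix_mul_assoc)
  have XA: "?X ** A = cadjoint Z ** A"
    using h1 by (metis matrix_mul_assoc)
  have "A ** ?X ** A = A" using AX h1 by simp
  moreover have "?X ** A ** ?X = ?X"
  proof -
    have "?X ** A ** ?X = cadjoint Z ** (A ** cadjoint Z ** A) ** Y"
      using XA by (simp add: matrix_mul_assoc)
    then show ?thesis using h3' by simp
  qed
  moreover have "cadjoint (A ** ?X) = A ** ?X" using AX h2 by simp
  moreover have "cadjoint (?X ** A) = ?X ** A" using XA h4' by simp
  ultimately show ?thesis by blast
qed

lemma mp_unique: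
  fixes A :: "complex^'n^'m"
  assumes a1: "A ** X ** A = A" and a2: "X ** A ** X = X" and a3: "cadjoint (A ** X) = A ** X"
    and a4: "cadjoint (X ** A) = X ** A"
    and b1: "A ** X' ** A = A" and b2: "X' ** A ** X' = X'" and b3: "cadjoint (A ** X') = A ** X'"
    and b4: "cadjoint (X' ** A) = X' ** A"
  shows "X = X'"
proof -
  have c1: "cadjoint A ** A ** X' = cadjoint A"
  proof -
    have "cadjoint A = cadjoint (A ** X' ** A)" using b1 by simp
    also have "\<dots> = cadjoint A ** cadjoint (A ** X')" by (simp add: cadj_mult matrix_mul_assoc)
    also have "\<dots> = cadjoint A ** A ** X'" using b3 by (simp add: matrix_mul_assoc)
    finally show ?thesis by simp
  qed
  have c2: "X ** cadjoint X ** cadjoint A = X"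
    using a3 a2 by (metis cadj_mult matrix_mul_assoc)
  have "X = X ** cadjoint X ** (cadjoint A ** A ** X')"
    using c1 c2 by simp
  also have "\<dots> = X ** cadjoint X ** cadjoint A ** A ** X'" by (simp add: matrix_mul_assoc)
  also have "\<dots> = X ** A ** X'" using c2 by simp
  finally have e1: "X = X ** A ** X'" .
  have d1: "cadjoint A = X ** A ** cadjoint A"
  proof -
    have "cadjoint A = cadjoint (A ** X ** A)" using a1 by simp
    also have "\<dots> = cadjoint (X ** A) ** cadjoint A" by (simp add: cadj_mult matrix_mul_assoc)
    finally show ?thesis using a4 by simp
  qed
  have d2: "cadjoint A ** cadjoint X' ** X' = X'"
    using b4 b2 by (metis cadj_mult matrix_mul_assoc)
  have "X' = (X ** A ** cadjoint A) ** cadjoint X' ** X'" using d1 d2 by simp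
  also have "\<dots> = X ** A ** (cadjoint A ** cadjoint X' ** X')" by (simp add: matrix_mul_assoc)
  also have "\<dots> = X ** A ** X'" using d2 by simp
  finally show ?thesis using e1 by simp
qed

lemma pinv_props:
  fixes A :: "complex^'n^'m"
  shows "A ** pinv A ** A = A" "pinv A ** A ** pinv A = pinv A"
    "cadjoint (A ** pinv A) = A ** pinv A" "cadjoint (pinv A ** A) = pinv A ** A"
proof -
  have "\<exists>!X. A ** X ** A = A \<and> X ** A ** X = X \<and>
            cadjoint (A ** X) = A ** X \<and> cadjoint (X ** A) = X ** A"
    using mp_exists[of A] mp_unique[of A] by blast
  then have "A ** pinv A ** A = A \<and> pinv A ** A ** pinv A = pinv A \<and>
            cadjoint (A ** pinv A) = A ** pinv A \<and> cadjoint (pinv A ** A) = pinv A ** A"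
    unfolding pinv_def by (rule theI')
  then show "A ** pinv A ** A = A" "pinv A ** A ** pinv A = pinv A"
    "cadjoint (A ** pinv A) = A ** pinv A" "cadjoint (pinv A ** A) = pinv A ** A" by blast+
qed



lemma idem_compl:
  fixes P :: "complex^'n^'n"
  assumes "P ** P = P"
  shows "(mat 1 - P) ** (mat 1 - P) = mat 1 - P"
  using assms by (simp add: mmul_ldiff mmul_rdiff)

lemma orth_right:
  fixes P :: "complex^'n^'n" and X Y :: "complex^'n^'m"
  assumes h: "cadjoint P = P" "P ** P = P" and x: "X = X ** P" and y: "Y = Y ** (mat 1 - P)"
  shows "inner X Y = 0"
proof -
  have "inner X Y = inner (X ** P) (Y ** (mat 1 - P))" using x y by simp
  also have "\<dots> = inner (X ** P ** cadjoint (mat 1 - P)) Y" by (simp add: inner_adj_right)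
  also have "\<dots> = inner (X ** (P ** (mat 1 - P))) Y" using h by (simp add: cadj_diff matrix_mul_assoc)
  also have "P ** (mat 1 - P) = 0" using h by (simp add: mmul_ldiff)
  finally show ?thesis by simp
qed

lemma orth_left:
  fixes P :: "complex^'m^'m" and X Y :: "complex^'n^'m"
  assumes h: "cadjoint P = P" "P ** P = P" and x: "X = P ** X" and y: "Y = (mat 1 - P) ** Y"
  shows "inner X Y = 0"
proof -
  have "inner X Y = inner (P ** X) ((mat 1 - P) ** Y)" using x y by simp
  also have "\<dots> = inner (cadjoint (mat 1 - P) ** P ** X) Y" by (simp add: inner_adj_left matrix_mul_assoc)
  also have "\<dots> = inner (((mat 1 - P) ** P) ** X) Y" using h by (simp add: cadj_diff)
  also have "(mat 1 - P) ** P = 0" using h by (simp add: mmul_rdiff)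
  finally show ?thesis by simp
qed

lemma pyth_left:
  fixes P :: "complex^'m^'m" and Y :: "complex^'n^'m"
  assumes h: "cadjoint P = P" "P ** P = P"
  shows "(norm ((mat 1 - P) ** Y))^2 = (norm Y)^2 - (norm (P ** Y))^2"
proof -
  have o: "inner (P ** Y) ((mat 1 - P) ** Y) = 0"
    by (rule orth_left[OF h]) (simp_all add: matrix_mul_assoc h idem_compl)
  have "Y = P ** Y + (mat 1 - P) ** Y" by (simp add: mmul_rdiff)
  then have "(norm Y)^2 = (norm (P ** Y + (mat 1 - P) ** Y))^2" by simp
  also have "\<dots> = (norm (P ** Y))^2 + (norm ((mat 1 - P) ** Y))^2"
    using o by (simp add: power2_norm_eq_inner inner_add_left inner_add_right inner_commute)
  finally show ?thesis by simp
qed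

lemma pyth_right:
  fixes P :: "complex^'n^'n" and Y :: "complex^'n^'m"
  assumes h: "cadjoint P = P" "P ** P = P"
  shows "(norm (Y ** (mat 1 - P)))^2 = (norm Y)^2 - (norm (Y ** P))^2"
proof -
  have o: "inner (Y ** P) (Y ** (mat 1 - P)) = 0"
    by (rule orth_right[OF h]) (simp_all add: matrix_mul_assoc[symmetric] h idem_compl)
  have "Y = Y ** P + Y ** (mat 1 - P)" by (simp add: mmul_ldiff)
  then have "(norm Y)^2 = (norm (Y ** P + Y ** (mat 1 - P)))^2" by simp
  also have "\<dots> = (norm (Y ** P))^2 + (norm (Y ** (mat 1 - P)))^2"
    using o by (simp add: power2_norm_eq_inner inner_add_left inner_add_right inner_commute)
  finally show ?thesis by simp
qed



lemma main1:
  fixes A B :: "complex^'n^'m"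
  shows "(norm (pinv B - pinv A))^2 \<le>
    (spec_norm (pinv A))^2 * ((norm (pinv A ** (B - A)))^2
            - (norm (pinv A ** (B - A) ** pinv B ** B))^2)
    + (spec_norm (pinv B))^2 * ((norm ((B - A) ** pinv B))^2
            - (norm (A ** pinv A ** (B - A) ** pinv B))^2)
    + (norm (pinv B ** (B - A) ** pinv A))^2"
proof -
  define a where "a = pinv A"
  define b where "b = pinv B"
  define E where "E = B - A"
  define PA where "PA = A ** a"
  define QB where "QB = b ** B"
  note pa = pinv_props[of A, folded a_def]
  note pb = pinv_props[of B, folded b_def]
  have PAh: "cadjoint PA = PA" "PA ** PA = PA"
    unfolding PA_def using pa by (simp_all add: matrix_mul_assoc)
  have QBh: "cadjoint QB = QB" "QB ** QB = QB"
    unfolding QB_def using pb by (simp_all add: matrix_mul_assoc)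
  have K1: "b ** cadjoint b ** cadjoint B = b"
  proof -
    have "b ** cadjoint b ** cadjoint B = b ** cadjoint (B ** b)"
      by (simp add: cadj_mult matrix_mul_assoc)
    then show ?thesis using pb by (simp add: matrix_mul_assoc)
  qed
  have K2: "cadjoint A ** PA = cadjoint A"
  proof -
    have "cadjoint A ** PA = cadjoint A ** cadjoint PA" using PAh by simp
    also have "\<dots> = cadjoint (A ** a ** A)" unfolding PA_def by (simp add: cadj_mult matrix_mul_assoc)
    finally show ?thesis using pa by simp
  qed
  have K3: "QB ** cadjoint B = cadjoint B"
  proof -
    have "QB ** cadjoint B = cadjoint QB ** cadjoint B" using QBh by simp
    also have "\<dots> = cadjoint (B ** b ** B)" unfolding QB_def by (simp add: cadj_mult matrix_mul_assoc)
    finally show ?thesis using pb by simp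
  qed
  have K4: "cadjoint A ** cadjoint a ** a = a"
  proof -
    have "cadjoint A ** cadjoint a = cadjoint (a ** A)" by (simp add: cadj_mult)
    then show ?thesis using pa by simp
  qed
  define X1 where "X1 = - (b ** E ** a)"
  define Z2 where "Z2 = cadjoint b ** cadjoint E ** (mat 1 - PA)"
  define X2 where "X2 = b ** Z2"
  define W3 where "W3 = (mat 1 - QB) ** cadjoint E ** cadjoint a"
  define X3 where "X3 = W3 ** a"
  have x2: "X2 = b - b ** PA"
  proof -
    have c0: "cadjoint A ** (mat 1 - PA) = 0" using K2 by (simp add: mmul_ldiff)
    have "cadjoint E ** (mat 1 - PA) = cadjoint B ** (mat 1 - PA)"
      unfolding E_def using c0 by (simp add: cadj_diff mmul_rdiff)
    then have "X2 = (b ** cadjoint b ** cadjoint B) ** (mat 1 - PA)"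
      unfolding X2_def Z2_def by (simp add: matrix_mul_assoc[symmetric])
    then show ?thesis using K1 by (simp add: mmul_ldiff)
  qed
  have x3: "X3 = QB ** a - a"
  proof -
    have c0: "(mat 1 - QB) ** cadjoint B = 0" using K3 by (simp add: mmul_rdiff)
    have "(mat 1 - QB) ** cadjoint E = - ((mat 1 - QB) ** cadjoint A)"
      unfolding E_def using c0 by (simp add: cadj_diff mmul_ldiff)
    then have "X3 = - ((mat 1 - QB) ** (cadjoint A ** cadjoint a ** a))"
      unfolding X3_def W3_def by (simp add: matrix_mul_assoc mmul_lneg)
    then show ?thesis using K4 by (simp add: mmul_rdiff)
  qed
  have x1: "X1 = b ** A ** a - QB ** a"
    unfolding X1_def E_def QB_def by (simp add: mmul_ldiff mmul_rdiff)
  have decomp: "b - a = X1 + X2 + X3"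
    unfolding x1 x2 x3 PA_def by (simp add: matrix_mul_assoc)
  have X1r: "X1 = X1 ** PA"
    unfolding X1_def PA_def using pa by (simp add: mmul_lneg matrix_mul_assoc[symmetric])
  have X1l: "X1 = QB ** X1"
    unfolding X1_def QB_def using pb by (simp add: mmul_rneg matrix_mul_assoc)
  have X2r: "X2 = X2 ** (mat 1 - PA)"
    unfolding X2_def Z2_def using idem_compl[OF PAh(2)] by (simp add: matrix_mul_assoc[symmetric])
  have X2l: "X2 = QB ** X2"
    unfolding X2_def QB_def using pb by (simp add: matrix_mul_assoc)
  have X3l: "X3 = (mat 1 - QB) ** X3"
    unfolding X3_def W3_def using idem_compl[OF QBh(2)] by (simp add: matrix_mul_assoc)
  have o12: "inner X1 X2 = 0" by (rule orth_right[OF PAh X1r X2r])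
  have o13: "inner X1 X3 = 0" by (rule orth_left[OF QBh X1l X3l])
  have o23: "inner X2 X3 = 0" by (rule orth_left[OF QBh X2l X3l])
  have n: "(norm (b - a))^2 = (norm X1)^2 + (norm X2)^2 + (norm X3)^2"
    unfolding decomp using o12 o13 o23
    by (simp add: power2_norm_eq_inner inner_add_left inner_add_right inner_commute)
  have n1: "(norm X1)^2 = (norm (b ** E ** a))^2" unfolding X1_def by simp
  have Z2a: "Z2 = cadjoint ((mat 1 - PA) ** (E ** b))"
    unfolding Z2_def using PAh by (simp add: cadj_mult cadj_diff matrix_mul_assoc)
  have "norm X2 \<le> spec_norm b * norm Z2" unfolding X2_def by (rule frob_mult_left)
  then have "(norm X2)^2 \<le> (spec_norm b * norm ((mat 1 - PA) ** (E ** b)))^2"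
    unfolding Z2a norm_cadj by (rule power_mono) simp
  then have n2: "(norm X2)^2 \<le> (spec_norm b)^2 * ((norm (E ** b))^2 - (norm (PA ** (E ** b)))^2)"
    by (simp add: power_mult_distrib pyth_left[OF PAh])
  have W3a: "W3 = cadjoint ((a ** E) ** (mat 1 - QB))"
    unfolding W3_def using QBh by (simp add: cadj_mult cadj_diff matrix_mul_assoc)
  have "norm X3 \<le> norm W3 * spec_norm a" unfolding X3_def by (rule frob_mult_right)
  then have "(norm X3)^2 \<le> (norm ((a ** E) ** (mat 1 - QB)) * spec_norm a)^2"
    unfolding W3a norm_cadj by (rule power_mono) simp
  then have n3: "(norm X3)^2 \<le> (spec_norm a)^2 * ((norm (a ** E))^2 - (norm (a ** E ** QB))^2)"
    by (simp add: power_mult_distrib pyth_right[OF QBh] mult.commute)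
  have e1: "a ** E ** QB = a ** E ** b ** B" unfolding QB_def by (simp add: matrix_mul_assoc)
  have e2: "PA ** (E ** b) = A ** a ** E ** b" unfolding PA_def by (simp add: matrix_mul_assoc)
  show ?thesis
    using n n1 n2 n3 unfolding a_def[symmetric] b_def[symmetric] E_def[symmetric] e1[symmetric] e2[symmetric]
    by linarith
qed


theorem theorem3p2:
  fixes A B E :: "complex^'n^'m"
  assumes "E = B - A"
  shows "(frob_norm (pinv B - pinv A))\<^sup>2 \<le>
    min ((spec_norm (pinv A))\<^sup>2 * ((frob_norm (pinv A ** E))\<^sup>2
            - (frob_norm (pinv A ** E ** pinv B ** B))\<^sup>2)
         + (spec_norm (pinv B))\<^sup>2 * ((frob_norm (E ** pinv B))\<^sup>2
            - (frob_norm (A ** pinv A ** E ** pinv B))\<^sup>2)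
         + (frob_norm (pinv B ** E ** pinv A))\<^sup>2)
        ((spec_norm (pinv A))\<^sup>2 * ((frob_norm (E ** pinv A))\<^sup>2
            - (frob_norm (B ** pinv B ** E ** pinv A))\<^sup>2)
         + (spec_norm (pinv B))\<^sup>2 * ((frob_norm (pinv B ** E))\<^sup>2
            - (frob_norm (pinv B ** E ** pinv A ** A))\<^sup>2)
         + (frob_norm (pinv A ** E ** pinv B))\<^sup>2)"
proof -
  have b1: "(frob_norm (pinv B - pinv A))\<^sup>2 \<le> (spec_norm (pinv A))\<^sup>2 * ((frob_norm (pinv A ** E))\<^sup>2
            - (frob_norm (pinv A ** E ** pinv B ** B))\<^sup>2)
         + (spec_norm (pinv B))\<^sup>2 * ((frob_norm (E ** pinv B))\<^sup>2
            - (frob_norm (A ** pinv A ** E ** pinv B))\<^sup>2)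
         + (frob_norm (pinv B ** E ** pinv A))\<^sup>2"
    unfolding frob_eq assms by (rule main1)
  have AB: "A - B = - E" using assms by simp
  have b2: "(frob_norm (pinv B - pinv A))\<^sup>2 \<le> (spec_norm (pinv A))\<^sup>2 * ((frob_norm (E ** pinv A))\<^sup>2
            - (frob_norm (B ** pinv B ** E ** pinv A))\<^sup>2)
         + (spec_norm (pinv B))\<^sup>2 * ((frob_norm (pinv B ** E))\<^sup>2
            - (frob_norm (pinv B ** E ** pinv A ** A))\<^sup>2)
         + (frob_norm (pinv A ** E ** pinv B))\<^sup>2"
  proof -
    have AB': "A - B = - (B - A)" by simp
    have m: "(norm (pinv A - pinv B))^2 \<le>
      (spec_norm (pinv B))^2 * ((norm (pinv B ** (- (B - A))))^2
            - (norm (pinv B ** (- (B - A)) ** pinv A ** A))^2)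
      + (spec_norm (pinv A))^2 * ((norm ((- (B - A)) ** pinv A))^2
            - (norm (B ** pinv B ** (- (B - A)) ** pinv A))^2)
      + (norm (pinv A ** (- (B - A)) ** pinv B))^2"
      using main1[of A B] unfolding AB' .
    have nm: "norm (pinv A - pinv B) = norm (pinv B - pinv A)" by (rule norm_minus_commute)
    show ?thesis using m unfolding frob_eq assms nm
      by (simp only: mmul_lneg mmul_rneg norm_minus_cancel)
  qed
  show ?thesis using b1 b2 by simp
qed

end
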